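(* Let $A$ be an associative commutative $\mathbb{C}$-algebra and $\Psi : A \to A$ an algebra automorphism, and regard $A$ as a subalgebra of the crossed product $A \rtimes_{\Psi} \mathbb{Z}$ via $a \mapsto a\delta^0$. Then the commutant $A' = \{ f \in A \rtimes_{\Psi}\mathbb{Z} : f * a = a * f \text{ for all } a \in A\}$ of $A$ in $A \rtimes_{\Psi} \mathbb{Z}$ is abelian; consequently $A'$ is the unique maximal abelian subalgebra of $A \rtimes_{\Psi} \mathbb{Z}$ containing $A$.
   Context: The crossed product $A \rtimes_{\Psi} \mathbb{Z}$ is the set of functions $f : \mathbb{Z} \to A$ with $f(n)=0$ for all but finitely many $n$, with pointwise addition and scalar multiplication and with multiplication given by twisted convolution $(f*g)(n) = \sum_{k\in\mathbb{Z}} f(k)\cdot \Psi^k(g(n-k))$, where $\Psi^k$ is the $k$-fold iterate of $\Psi$ (negative $k$ meaning iterates of $\Psi^{-1}$). Elements are written $f = \sum_n f_n \delta^n$ with $f_n = f(n)$, and $(f_n\delta^n)*(g_m\delta^m) = f_n \Psi^n(g_m)\delta^{n+m}$. *)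

theory Defs
  imports Complex_Main
begin

text \<open>An associative commutative complex algebra is modelled as a type 'a of class
comm_ring (associative, commutative, not necessarily unital) together with a scalar
multiplication sc by complex numbers making it a complex vector space, compatible
with the multiplication.\<close>

definition is_C_algebra :: "(complex \<Rightarrow> 'a::comm_ring \<Rightarrow> 'a) \<Rightarrow> bool" where
  "is_C_algebra sc \<longleftrightarrow> module sc \<and>
     (\<forall>c x y. sc c (x * y) = sc c x * y \<and> sc c (x * y) = x * sc c y)"

definition is_alg_automorphism ::
  "(complex \<Rightarrow> 'a::comm_ring \<Rightarrow> 'a) \<Rightarrow> ('a \<Rightarrow> 'a) \<Rightarrow> bool" where
  "is_alg_automorphism sc \<Psi> \<longleftrightarrow> bij \<Psi> \<and>
     (\<forall>x y. \<Psi> (x + y) = \<Psi> x + \<Psi> y) \<and>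
     (\<forall>x y. \<Psi> (x * y) = \<Psi> x * \<Psi> y) \<and>
     (\<forall>c x. \<Psi> (sc c x) = sc c (\<Psi> x))"

definition iter_int :: "('a \<Rightarrow> 'a) \<Rightarrow> int \<Rightarrow> 'a \<Rightarrow> 'a" where
  "iter_int \<Psi> k = (if 0 \<le> k then \<Psi> ^^ nat k else (inv \<Psi>) ^^ nat (- k))"

definition crossed :: "(int \<Rightarrow> 'a::zero) set" where
  "crossed = {f. finite {n. f n \<noteq> 0}}"

definition cp_add :: "(int \<Rightarrow> 'a::plus) \<Rightarrow> (int \<Rightarrow> 'a) \<Rightarrow> int \<Rightarrow> 'a" where
  "cp_add f g = (\<lambda>n. f n + g n)"

definition cp_scale :: "(complex \<Rightarrow> 'a \<Rightarrow> 'a) \<Rightarrow> complex \<Rightarrow> (int \<Rightarrow> 'a) \<Rightarrow> int \<Rightarrow> 'a" where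
  "cp_scale sc c f = (\<lambda>n. sc c (f n))"

text \<open>Twisted convolution (f*g)(n) = sum_k f(k) Psi^k(g(n-k)); the sum is over the
finite support of f (other terms vanish).\<close>
definition cp_mult :: "('a::comm_ring \<Rightarrow> 'a) \<Rightarrow> (int \<Rightarrow> 'a) \<Rightarrow> (int \<Rightarrow> 'a) \<Rightarrow> int \<Rightarrow> 'a" where
  "cp_mult \<Psi> f g = (\<lambda>n. \<Sum>k\<in>{k. f k \<noteq> 0}. f k * iter_int \<Psi> k (g (n - k)))"

definition cp_emb :: "'a::zero \<Rightarrow> int \<Rightarrow> 'a" where
  "cp_emb a = (\<lambda>n. if n = 0 then a else 0)"

definition commutant :: "('a::comm_ring \<Rightarrow> 'a) \<Rightarrow> (int \<Rightarrow> 'a) set" where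
  "commutant \<Psi> = {f \<in> crossed. \<forall>a. cp_mult \<Psi> f (cp_emb a) = cp_mult \<Psi> (cp_emb a) f}"

definition is_subalgebra ::
  "(complex \<Rightarrow> 'a::comm_ring \<Rightarrow> 'a) \<Rightarrow> ('a \<Rightarrow> 'a) \<Rightarrow> (int \<Rightarrow> 'a) set \<Rightarrow> bool" where
  "is_subalgebra sc \<Psi> B \<longleftrightarrow> B \<subseteq> crossed \<and> (\<lambda>_. 0) \<in> B \<and>
     (\<forall>f\<in>B. \<forall>g\<in>B. cp_add f g \<in> B \<and> cp_mult \<Psi> f g \<in> B) \<and>
     (\<forall>c. \<forall>f\<in>B. cp_scale sc c f \<in> B)"

definition is_abelian :: "('a::comm_ring \<Rightarrow> 'a) \<Rightarrow> (int \<Rightarrow> 'a) set \<Rightarrow> bool" where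
  "is_abelian \<Psi> B \<longleftrightarrow> (\<forall>f\<in>B. \<forall>g\<in>B. cp_mult \<Psi> f g = cp_mult \<Psi> g f)"

definition is_max_abelian_containing_A ::
  "(complex \<Rightarrow> 'a::comm_ring \<Rightarrow> 'a) \<Rightarrow> ('a \<Rightarrow> 'a) \<Rightarrow> (int \<Rightarrow> 'a) set \<Rightarrow> bool" where
  "is_max_abelian_containing_A sc \<Psi> B \<longleftrightarrow>
     is_subalgebra sc \<Psi> B \<and> is_abelian \<Psi> B \<and> range cp_emb \<subseteq> B \<and>
     (\<forall>C. is_subalgebra sc \<Psi> C \<and> is_abelian \<Psi> C \<and> B \<subseteq> C \<longrightarrow> C = B)"

end

theory Submission
  imports Defs
begin

definition supp :: "(int \<Rightarrow> 'a::zero) \<Rightarrow> int set" where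
  "supp f = {n. f n \<noteq> 0}"

locale autctx =
  fixes \<Psi> :: "'a::comm_ring \<Rightarrow> 'a"
  assumes bijP: "bij \<Psi>"
    and addP: "\<And>x y. \<Psi> (x + y) = \<Psi> x + \<Psi> y"
    and mulP: "\<And>x y. \<Psi> (x * y) = \<Psi> x * \<Psi> y"
begin

lemma invP1: "\<Psi> (inv \<Psi> x) = x"
  using bijP by (meson bij_inv_eq_iff)

lemma invP2: "inv \<Psi> (\<Psi> x) = x"
  using bijP by (simp add: bij_is_inj)

lemma zeroP: "\<Psi> 0 = 0"
  using addP[of 0 0] by simp

lemma inv_add: "inv \<Psi> (x + y) = inv \<Psi> x + inv \<Psi> y"
proof -
  have "\<Psi> (inv \<Psi> x + inv \<Psi> y) = x + y" by (simp add: addP invP1)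
  then show ?thesis by (metis invP2)
qed

lemma inv_mul: "inv \<Psi> (x * y) = inv \<Psi> x * inv \<Psi> y"
proof -
  have "\<Psi> (inv \<Psi> x * inv \<Psi> y) = x * y" by (simp add: mulP invP1)
  then show ?thesis by (metis invP2)
qed

lemma inv_zero: "inv \<Psi> 0 = 0"
  by (metis invP2 zeroP)

lemma iter0: "iter_int \<Psi> 0 x = x"
  by (simp add: iter_int_def)

lemma iter_succ: "iter_int \<Psi> (k + 1) x = \<Psi> (iter_int \<Psi> k x)"
proof (cases "0 \<le> k")
  case True
  then have "nat (k+1) = Suc (nat k)" by simp
  then show ?thesis using True by (simp add: iter_int_def)
next
  case False
  show ?thesis
  proof (cases "k = -1")
    case True
    then show ?thesis by (simp add: iter_int_def invP1)
  next
    case False2: False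
    then have "nat (- k) = Suc (nat (- (k+1)))" using False by simp
    then show ?thesis using False False2 by (simp add: iter_int_def invP1)
  qed
qed

lemma iter_pred: "iter_int \<Psi> (k - 1) x = inv \<Psi> (iter_int \<Psi> k x)"
  using iter_succ[of "k - 1" x] by (simp add: invP2)

lemma iter_add: "iter_int \<Psi> (k + m) x = iter_int \<Psi> k (iter_int \<Psi> m x)"
proof (induction k rule: int_induct[where k=0])
  case base
  then show ?case by (simp add: iter0)
next
  case (step1 i)
  have "iter_int \<Psi> (i + 1 + m) x = iter_int \<Psi> ((i + m) + 1) x" by (simp add: ac_simps)
  then show ?case using step1 by (simp add: iter_succ)
next
  case (step2 i)
  have e: "i - 1 + m = (i + m) - 1" by simp
  have "iter_int \<Psi> (i - 1 + m) x = iter_int \<Psi> ((i + m) - 1) x" by (simp only: e)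
  then show ?case using step2 by (simp add: iter_pred)
qed

lemma iter_hom: "iter_int \<Psi> k (x * y) = iter_int \<Psi> k x * iter_int \<Psi> k y
   \<and> iter_int \<Psi> k (x + y) = iter_int \<Psi> k x + iter_int \<Psi> k y \<and> iter_int \<Psi> k 0 = 0"
proof (induction k arbitrary: x y rule: int_induct[where k=0])
  case base
  then show ?case by (simp add: iter0)
next
  case (step1 i)
  then show ?case by (simp add: iter_succ mulP addP zeroP)
next
  case (step2 i)
  then show ?case by (simp add: iter_pred inv_mul inv_add inv_zero)
qed

lemma iter_mul: "iter_int \<Psi> k (x * y) = iter_int \<Psi> k x * iter_int \<Psi> k y"
  using iter_hom by blast
lemma iter_zero: "iter_int \<Psi> k 0 = 0"
  using iter_hom by blast

lemma cp_mult_S: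
  assumes "finite S" "{k. f k \<noteq> 0} \<subseteq> S"
  shows "cp_mult \<Psi> f g n = (\<Sum>k\<in>S. f k * iter_int \<Psi> k (g (n - k)))"
  unfolding cp_mult_def
  by (rule sum.mono_neutral_left) (use assms in auto)

lemma mult_emb_right:
  assumes "f \<in> crossed"
  shows "cp_mult \<Psi> f (cp_emb a) n = f n * iter_int \<Psi> n a"
proof -
  have fin: "finite {k. f k \<noteq> 0}" using assms by (simp add: crossed_def)
  have "cp_mult \<Psi> f (cp_emb a) n =
     (\<Sum>k\<in>{k. f k \<noteq> 0}. if k = n then f n * iter_int \<Psi> n a else 0)"
    unfolding cp_mult_def cp_emb_def
    by (rule sum.cong) (auto simp: iter_zero)
  also have "\<dots> = f n * iter_int \<Psi> n a"
    using fin by (simp add: sum.delta)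
  finally show ?thesis .
qed

lemma mult_emb_left:
  shows "cp_mult \<Psi> (cp_emb a) f n = a * f n"
proof (cases "a = 0")
  case True
  then show ?thesis by (simp add: cp_mult_def cp_emb_def)
next
  case False
  then have "{k. cp_emb a k \<noteq> 0} = {0}" by (auto simp: cp_emb_def)
  then show ?thesis by (simp add: cp_mult_def cp_emb_def iter0)
qed

lemma commutant_char:
  "commutant \<Psi> = {f \<in> crossed. \<forall>n a. f n * iter_int \<Psi> n a = a * f n}"
  unfolding commutant_def
  by (auto simp: fun_eq_iff mult_emb_right mult_emb_left)

lemma mult_crossed:
  assumes "f \<in> crossed" "g \<in> crossed"
  shows "cp_mult \<Psi> f g \<in> crossed"
proof -
  let ?F = "{k. f k \<noteq> 0}" and ?G = "{k. g k \<noteq> 0}"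
  have ff: "finite ?F" "finite ?G" using assms by (auto simp: crossed_def)
  have "{n. cp_mult \<Psi> f g n \<noteq> 0} \<subseteq> (\<lambda>(k, m). k + m) ` (?F \<times> ?G)"
  proof
    fix n assume n: "n \<in> {n. cp_mult \<Psi> f g n \<noteq> 0}"
    show "n \<in> (\<lambda>(k, m). k + m) ` (?F \<times> ?G)"
    proof (rule ccontr)
      assume nn: "n \<notin> (\<lambda>(k, m). k + m) ` (?F \<times> ?G)"
      have "\<And>k. k \<in> ?F \<Longrightarrow> g (n - k) = 0"
      proof (rule ccontr)
        fix k assume "k \<in> ?F" "g (n - k) \<noteq> 0"
        then have "(k, n - k) \<in> ?F \<times> ?G" by auto
        then have "n \<in> (\<lambda>(k, m). k + m) ` (?F \<times> ?G)" by (metis (no_types, lifting) add_diff_cancel_left' add_diff_eq case_prod_conv image_eqI)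
        with nn show False by blast
      qed
      then have "cp_mult \<Psi> f g n = 0" unfolding cp_mult_def
        by (intro sum.neutral) (auto simp: iter_zero)
      with n show False by simp
    qed
  qed
  moreover have "finite ((\<lambda>(k, m). k + m) ` (?F \<times> ?G))" using ff by auto
  ultimately show ?thesis unfolding crossed_def by (auto intro: finite_subset)
qed

lemma mult_comm_in:
  assumes "f \<in> commutant \<Psi>" "g \<in> commutant \<Psi>"
  shows "cp_mult \<Psi> f g \<in> commutant \<Psi>"
proof -
  have fc: "f \<in> crossed" "\<And>n a. f n * iter_int \<Psi> n a = a * f n"
    and gc: "g \<in> crossed" "\<And>n a. g n * iter_int \<Psi> n a = a * g n"
    using assms by (auto simp: commutant_char)
  have "cp_mult \<Psi> f g n * iter_int \<Psi> n a = a * cp_mult \<Psi> f g n" for n a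
  proof -
    have "cp_mult \<Psi> f g n * iter_int \<Psi> n a =
      (\<Sum>k\<in>{k. f k \<noteq> 0}. f k * iter_int \<Psi> k (g (n - k)) * iter_int \<Psi> n a)"
      unfolding cp_mult_def by (simp add: sum_distrib_right)
    also have "\<dots> = (\<Sum>k\<in>{k. f k \<noteq> 0}. a * (f k * iter_int \<Psi> k (g (n - k))))"
    proof (rule sum.cong)
      fix k
      have "iter_int \<Psi> n a = iter_int \<Psi> k (iter_int \<Psi> (n - k) a)"
        using iter_add[of k "n - k" a] by simp
      then have "f k * iter_int \<Psi> k (g (n - k)) * iter_int \<Psi> n a
          = f k * iter_int \<Psi> k (g (n - k) * iter_int \<Psi> (n - k) a)"
        by (simp add: iter_mul mult.assoc)
      also have "\<dots> = f k * iter_int \<Psi> k (a * g (n - k))" by (simp add: gc(2))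
      also have "\<dots> = (f k * iter_int \<Psi> k a) * iter_int \<Psi> k (g (n - k))"
        by (simp add: iter_mul mult.assoc)
      also have "\<dots> = a * (f k * iter_int \<Psi> k (g (n - k)))"
        by (simp add: fc(2) mult.assoc)
      finally show "f k * iter_int \<Psi> k (g (n - k)) * iter_int \<Psi> n a
          = a * (f k * iter_int \<Psi> k (g (n - k)))" .
    qed simp
    also have "\<dots> = a * cp_mult \<Psi> f g n"
      unfolding cp_mult_def by (simp add: sum_distrib_left)
    finally show ?thesis .
  qed
  then show ?thesis using mult_crossed[OF fc(1) gc(1)] by (simp add: commutant_char)
qed

lemma comm_abelian:
  assumes "f \<in> commutant \<Psi>" "g \<in> commutant \<Psi>"
  shows "cp_mult \<Psi> f g = cp_mult \<Psi> g f"
proof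
  fix n
  have fc: "f \<in> crossed" "\<And>n a. f n * iter_int \<Psi> n a = a * f n"
    and gc: "g \<in> crossed" "\<And>n a. g n * iter_int \<Psi> n a = a * g n"
    using assms by (auto simp: commutant_char)
  let ?F = "{k. f k \<noteq> 0}" and ?G = "{k. g k \<noteq> 0}"
  have ff: "finite ?F" "finite ?G" using fc gc by (auto simp: crossed_def)
  let ?S = "?F \<union> (\<lambda>j. n - j) ` ?G"
  have fS: "finite ?S" using ff by auto
  have "cp_mult \<Psi> f g n = (\<Sum>k\<in>?S. f k * iter_int \<Psi> k (g (n - k)))"
    by (rule cp_mult_S) (use fS in auto)
  also have "\<dots> = (\<Sum>k\<in>?S. f k * g (n - k))"
    by (simp add: fc(2) mult.commute)
  finally have L: "cp_mult \<Psi> f g n = (\<Sum>k\<in>?S. f k * g (n - k))" .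
  have "cp_mult \<Psi> g f n = (\<Sum>j\<in>?G. g j * iter_int \<Psi> j (f (n - j)))"
    by (simp add: cp_mult_def)
  also have "\<dots> = (\<Sum>j\<in>?G. f (n - j) * g j)"
    by (simp add: gc(2))
  also have "\<dots> = (\<Sum>k\<in>(\<lambda>j. n - j) ` ?G. f k * g (n - k))"
    by (subst sum.reindex) (auto simp: inj_on_def)
  also have "\<dots> = (\<Sum>k\<in>?S. f k * g (n - k))"
  proof (rule sum.mono_neutral_left)
    show "\<forall>i\<in>?S - (\<lambda>j. n - j) ` ?G. f i * g (n - i) = 0"
    proof
      fix i assume i: "i \<in> ?S - (\<lambda>j. n - j) ` ?G"
      have "g (n - i) = 0"
      proof (rule ccontr)
        assume "g (n - i) \<noteq> 0"
        then have "n - (n - i) \<in> (\<lambda>j. n - j) ` ?G" by blast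
        with i show False by simp
      qed
      then show "f i * g (n - i) = 0" by simp
    qed
  qed (use fS in auto)
  finally show "cp_mult \<Psi> f g n = cp_mult \<Psi> g f n" using L by simp
qed

end

theorem proposition2p1:
  fixes sc :: "complex \<Rightarrow> 'a::comm_ring \<Rightarrow> 'a" and \<Psi> :: "'a \<Rightarrow> 'a"
  assumes "is_C_algebra sc"
    and "is_alg_automorphism sc \<Psi>"
  shows "is_abelian \<Psi> (commutant \<Psi>) \<and>
         is_max_abelian_containing_A sc \<Psi> (commutant \<Psi>) \<and>
         (\<forall>B. is_max_abelian_containing_A sc \<Psi> B \<longrightarrow> B = commutant \<Psi>)"
proof -
  interpret autctx \<Psi>
    using assms(2) by unfold_locales (auto simp: is_alg_automorphism_def)
  have modl: "module sc" and scm: "\<And>c x y. sc c (x * y) = sc c x * y"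
    using assms(1) by (auto simp: is_C_algebra_def)
  have sc0: "sc c 0 = 0" for c using module.scale_zero_right[OF modl] by simp
  have ab: "is_abelian \<Psi> (commutant \<Psi>)"
    unfolding is_abelian_def using comm_abelian by blast
  have emb: "range cp_emb \<subseteq> commutant \<Psi>"
  proof
    fix f :: "int \<Rightarrow> 'a" assume "f \<in> range cp_emb"
    then obtain b where f: "f = cp_emb b" by auto
    have "finite {n. cp_emb b n \<noteq> 0}"
      by (rule finite_subset[of _ "{0}"]) (auto simp: cp_emb_def)
    then show "f \<in> commutant \<Psi>" unfolding f commutant_char crossed_def
      by (auto simp: cp_emb_def iter0 mult.commute)
  qed
  have sub: "is_subalgebra sc \<Psi> (commutant \<Psi>)"
    unfolding is_subalgebra_def
  proof (intro conjI ballI allI)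
    show "commutant \<Psi> \<subseteq> crossed" by (auto simp: commutant_def)
    show "(\<lambda>_. 0) \<in> commutant \<Psi>" by (simp add: commutant_char crossed_def)
  next
    fix f g assume f: "f \<in> commutant \<Psi>" and g: "g \<in> commutant \<Psi>"
    show "cp_mult \<Psi> f g \<in> commutant \<Psi>" using mult_comm_in[OF f g] .
    have "finite {n. f n \<noteq> 0}" "finite {n. g n \<noteq> 0}"
      using f g by (auto simp: commutant_char crossed_def)
    then have "finite {n. f n + g n \<noteq> 0}"
      by (rule finite_subset[rotated, OF finite_UnI]) auto
    then show "cp_add f g \<in> commutant \<Psi>"
      using f g by (auto simp: commutant_char crossed_def cp_add_def distrib_left distrib_right)
  next
    fix c and f :: "int \<Rightarrow> 'a" assume f: "f \<in> commutant \<Psi>"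
    have "finite {n. f n \<noteq> 0}" using f by (auto simp: commutant_char crossed_def)
    then have "finite {n. sc c (f n) \<noteq> 0}"
      by (rule finite_subset[rotated]) (auto simp: sc0)
    moreover have "sc c (f n) * iter_int \<Psi> n a = a * sc c (f n)" for n a
    proof -
      have "sc c (f n) * iter_int \<Psi> n a = sc c (f n * iter_int \<Psi> n a)" by (simp add: scm)
      also have "\<dots> = sc c (a * f n)" using f by (simp add: commutant_char)
      also have "\<dots> = sc c (f n * a)" by (simp add: mult.commute)
      also have "\<dots> = a * sc c (f n)" using scm[of c "f n" a] by (metis mult.commute)
      finally show ?thesis .
    qed
    ultimately show "cp_scale sc c f \<in> commutant \<Psi>"
      by (simp add: commutant_char crossed_def cp_scale_def)
  qed
  have below: "B \<subseteq> commutant \<Psi>" if "is_subalgebra sc \<Psi> B" "is_abelian \<Psi> B" "range cp_emb \<subseteq> B" for B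
  proof
    fix f assume f: "f \<in> B"
    then have "f \<in> crossed" using that(1) by (auto simp: is_subalgebra_def)
    moreover have "cp_mult \<Psi> f (cp_emb a) = cp_mult \<Psi> (cp_emb a) f" for a
      using that(2,3) f unfolding is_abelian_def by (meson rangeI subsetD)
    ultimately show "f \<in> commutant \<Psi>" by (simp add: commutant_def)
  qed
  have max: "is_max_abelian_containing_A sc \<Psi> (commutant \<Psi>)"
    unfolding is_max_abelian_containing_A_def
  proof (intro conjI allI impI sub ab emb)
    fix C assume C: "is_subalgebra sc \<Psi> C \<and> is_abelian \<Psi> C \<and> commutant \<Psi> \<subseteq> C"
    then have "C \<subseteq> commutant \<Psi>" using below emb by blast
    then show "C = commutant \<Psi>" using C by blast
  qed
  have uniq: "B = commutant \<Psi>" if B: "is_max_abelian_containing_A sc \<Psi> B" for B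
  proof -
    have "B \<subseteq> commutant \<Psi>" using below B by (auto simp: is_max_abelian_containing_A_def)
    then show ?thesis using B sub ab by (auto simp: is_max_abelian_containing_A_def)
  qed
  show ?thesis using ab max uniq by blast
qed

end
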